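(* Let $\mathbf{u}=(u_1,u_2)\in\mathbb{R}[x_1,x_2]_d^2$ and $p\in\Sigma[x_1,x_2]_{2d}$, and suppose $\nabla f_p(\mathbf{u})=0$ and $\nabla^2 f_p(\mathbf{u})\succeq0$. Let $g,h,u_1',u_2'$ be real binary forms with $(u_1,u_2)=(u_1'gh,u_2'gh)$, $\gcd(u_1,u_2)=gh$, $\gcd(u_1',u_2')=1$, $\gcd(u_1'^2+u_2'^2,g)=1$, and every (possibly complex) root of $h$ a root of $u_1'^2+u_2'^2$. Let $k=\deg(h)$ and let $\mathbf{w}=(u_1'gx_1^k,\,u_2'gx_1^k)\in\mathbb{R}[x_1,x_2]_d^2$. If $$p\in\operatorname{im}(\mathcal{A}_{\mathbf{w}})+\operatorname{cone}\big(\sigma(\ker(\mathcal{A}_{\mathbf{u}}))\big),$$ then $f_p(\mathbf{u})=0$.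
   Context: $\mathbb{R}[x_1,x_2]_n$ denotes the space of real binary forms of degree $n$, and $\Sigma[x_1,x_2]_{2d}$ the cone of sums of squares of binary forms of degree $d$. For $\mathbf{a}=(a_1,a_2)\in\mathbb{R}[x_1,x_2]_d^2$, $\mathcal{A}_{\mathbf{a}}:\mathbb{R}[x_1,x_2]_d^2\to\mathbb{R}[x_1,x_2]_{2d}$ is $(v_1,v_2)\mapsto a_1v_1+a_2v_2$; $\sigma(v_1,v_2)=v_1^2+v_2^2$; $\operatorname{cone}(S)$ is the set of nonnegative combinations. A root of a binary form is a nonzero complex zero up to scaling; gcd is the common divisor of highest degree, coprime means gcd constant. Fix any inner product $\langle\cdot,\cdot\rangle$ on $\mathbb{R}[x_1,x_2]_{2d}$ with norm $\|\cdot\|$ and let $f_p(\mathbf{u})=\|\sigma(\mathbf{u})-p\|^2$. $\nabla f_p(\mathbf{u})=0$ means $\langle\mathcal{A}_{\mathbf{u}}(\mathbf{v}),\sigma(\mathbf{u})-p\rangle=0$ for all $\mathbf{v}\in\mathbb{R}[x_1,x_2]_d^2$, and $\nabla^2 f_p(\mathbf{u})\succeq0$ means $\langle\sigma(\mathbf{v}),\sigma(\mathbf{u})-p\rangle+2\|\mathcal{A}_{\mathbf{u}}(\mathbf{v})\|^2\ge0$ for all $\mathbf{v}\in\mathbb{R}[x_1,x_2]_d^2$. *)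

theory Defs
  imports "HOL-Computational_Algebra.Computational_Algebra"
begin

text \<open>Real binary forms are represented as bivariate polynomials of type
  real poly poly: the outer variable is x1, the inner (coefficient) variable is x2.\<close>

type_synonym bpoly = "real poly poly"

definition X1 :: bpoly where "X1 = [:0, 1:]"
definition X2 :: bpoly where "X2 = [:[:0, 1:]:]"

definition homogeneous :: "nat \<Rightarrow> bpoly \<Rightarrow> bool" where
  "homogeneous n P \<longleftrightarrow> (\<forall>i j. coeff (coeff P i) j \<noteq> 0 \<longrightarrow> i + j = n)"

definition forms :: "nat \<Rightarrow> bpoly set" where
  "forms n = {P. homogeneous n P}"

definition is_form :: "bpoly \<Rightarrow> bool" where
  "is_form P \<longleftrightarrow> (\<exists>n. homogeneous n P)"

definition rscale :: "real \<Rightarrow> bpoly \<Rightarrow> bpoly" where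
  "rscale c P = smult [:c:] P"

definition sos_forms :: "nat \<Rightarrow> bpoly set" where
  "sos_forms d = {p. \<exists>qs. set qs \<subseteq> forms d \<and> p = sum_list (map (\<lambda>q. q ^ 2) qs)}"

definition A_op :: "bpoly \<times> bpoly \<Rightarrow> bpoly \<times> bpoly \<Rightarrow> bpoly" where
  "A_op a v = fst a * fst v + snd a * snd v"

definition sigma :: "bpoly \<times> bpoly \<Rightarrow> bpoly" where
  "sigma v = fst v ^ 2 + snd v ^ 2"

definition A_image :: "nat \<Rightarrow> bpoly \<times> bpoly \<Rightarrow> bpoly set" where
  "A_image d a = A_op a ` (forms d \<times> forms d)"

definition A_kernel :: "nat \<Rightarrow> bpoly \<times> bpoly \<Rightarrow> (bpoly \<times> bpoly) set" where
  "A_kernel d a = {v \<in> forms d \<times> forms d. A_op a v = 0}"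

definition cone_of :: "bpoly set \<Rightarrow> bpoly set" where
  "cone_of S = {x. \<exists>cs ss. length cs = length ss \<and> (\<forall>c\<in>set cs. c \<ge> 0) \<and> set ss \<subseteq> S
                  \<and> x = sum_list (map2 rscale cs ss)}"

definition set_plus_b :: "bpoly set \<Rightarrow> bpoly set \<Rightarrow> bpoly set" where
  "set_plus_b A B = {a + b | a b. a \<in> A \<and> b \<in> B}"

definition inner_product_on :: "nat \<Rightarrow> (bpoly \<Rightarrow> bpoly \<Rightarrow> real) \<Rightarrow> bool" where
  "inner_product_on n ip \<longleftrightarrow>
     (\<forall>x\<in>forms n. \<forall>y\<in>forms n. ip x y = ip y x) \<and>
     (\<forall>x\<in>forms n. \<forall>y\<in>forms n. \<forall>z\<in>forms n. ip (x + y) z = ip x z + ip y z) \<and>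
     (\<forall>c. \<forall>x\<in>forms n. \<forall>y\<in>forms n. ip (rscale c x) y = c * ip x y) \<and>
     (\<forall>x\<in>forms n. x \<noteq> 0 \<longrightarrow> ip x x > 0)"

definition f_obj :: "(bpoly \<Rightarrow> bpoly \<Rightarrow> real) \<Rightarrow> bpoly \<Rightarrow> bpoly \<times> bpoly \<Rightarrow> real" where
  "f_obj ip p u = ip (sigma u - p) (sigma u - p)"

definition grad_zero :: "nat \<Rightarrow> (bpoly \<Rightarrow> bpoly \<Rightarrow> real) \<Rightarrow> bpoly \<Rightarrow> bpoly \<times> bpoly \<Rightarrow> bool" where
  "grad_zero d ip p u \<longleftrightarrow>
     (\<forall>v \<in> forms d \<times> forms d. ip (A_op u v) (sigma u - p) = 0)"

definition hess_psd :: "nat \<Rightarrow> (bpoly \<Rightarrow> bpoly \<Rightarrow> real) \<Rightarrow> bpoly \<Rightarrow> bpoly \<times> bpoly \<Rightarrow> bool" where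
  "hess_psd d ip p u \<longleftrightarrow>
     (\<forall>v \<in> forms d \<times> forms d.
        ip (sigma v) (sigma u - p) + 2 * ip (A_op u v) (A_op u v) \<ge> 0)"

definition eval_form :: "bpoly \<Rightarrow> complex \<Rightarrow> complex \<Rightarrow> complex" where
  "eval_form P z1 z2 = poly (map_poly (\<lambda>c. poly (map_poly complex_of_real c) z2) P) z1"

definition is_root :: "bpoly \<Rightarrow> complex \<times> complex \<Rightarrow> bool" where
  "is_root P z \<longleftrightarrow> z \<noteq> (0, 0) \<and> eval_form P (fst z) (snd z) = 0"

definition is_gcd :: "bpoly \<Rightarrow> bpoly \<Rightarrow> bpoly \<Rightarrow> bool" where
  "is_gcd G a b \<longleftrightarrow> G dvd a \<and> G dvd b \<and> (\<forall>c. c dvd a \<and> c dvd b \<longrightarrow> c dvd G)"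

end

theory Submission
  imports Defs "HOL-Computational_Algebra.Field_as_Ring"
begin


lemma homogeneous_0[simp]: "homogeneous n 0"
  by (simp add: homogeneous_def)

lemma homogeneous_add: "homogeneous n F \<Longrightarrow> homogeneous n G \<Longrightarrow> homogeneous n (F + G)"
  unfolding homogeneous_def by (metis add.right_neutral coeff_add)

lemma homogeneous_uminus: "homogeneous n F \<Longrightarrow> homogeneous n (- F)"
  unfolding homogeneous_def by simp

lemma homogeneous_diff: "homogeneous n F \<Longrightarrow> homogeneous n G \<Longrightarrow> homogeneous n (F - G)"
  using homogeneous_add[of n F "-G"] homogeneous_uminus by simp

lemma homogeneous_unique:
  assumes "F \<noteq> 0" "homogeneous n F" "homogeneous m F" shows "n = m"
proof -
  obtain i where i: "coeff F i \<noteq> 0" using assms(1) by (metis leading_coeff_0_iff)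
  then obtain j where "coeff (coeff F i) j \<noteq> 0" by (metis leading_coeff_0_iff)
  thus ?thesis using assms(2,3) unfolding homogeneous_def by metis
qed

definition ev :: "bpoly \<Rightarrow> real \<Rightarrow> real \<Rightarrow> real" where
  "ev F x y = poly (poly F [:x:]) y"

lemma ev_add[simp]: "ev (F + G) x y = ev F x y + ev G x y" by (simp add: ev_def)
lemma ev_mult[simp]: "ev (F * G) x y = ev F x y * ev G x y" by (simp add: ev_def)
lemma ev_diff[simp]: "ev (F - G) x y = ev F x y - ev G x y" by (simp add: ev_def)
lemma ev_uminus[simp]: "ev (- G) x y = - ev G x y" by (simp add: ev_def)
lemma ev_power[simp]: "ev (F ^ n) x y = ev F x y ^ n" by (simp add: ev_def poly_power)
lemma ev_0[simp]: "ev 0 x y = 0" by (simp add: ev_def)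
lemma ev_smult[simp]: "ev (smult [:c:] F) x y = c * ev F x y" by (simp add: ev_def)
lemma ev_rscale[simp]: "ev (rscale c F) x y = c * ev F x y" by (simp add: rscale_def)
lemma ev_sum: "ev (\<Sum>i\<in>A. F i) x y = (\<Sum>i\<in>A. ev (F i) x y)"
  by (simp add: ev_def poly_sum)
lemma ev_monom[simp]: "ev (monom (monom c m) i) x y = c * y ^ m * x ^ i"
  by (simp add: ev_def poly_monom poly_power)

lemma ev_pCons: "ev (pCons a F) x y = poly a y + x * ev F x y"
  by (simp add: ev_def)

lemma coeff_poly_const: "coeff (poly D [:x:]) j = poly (map_poly (\<lambda>c. coeff c j) D) x"
  by (induction D) (simp_all add: map_poly_pCons)

lemma ev_eqI:
  assumes "\<And>x y. y \<noteq> 0 \<Longrightarrow> ev F x y = ev G x y" shows "F = G"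
proof -
  define D where "D = F - G"
  have "\<And>x y. y \<noteq> 0 \<Longrightarrow> poly (poly D [:x:]) y = 0"
    using assms by (simp add: D_def ev_def)
  have c: "poly D [:x:] = 0" for x
  proof (rule ccontr)
    assume "poly D [:x:] \<noteq> 0"
    then have "finite {y. poly (poly D [:x:]) y = 0}" by (rule poly_roots_finite)
    moreover have "{y. y \<noteq> (0::real)} \<subseteq> {y. poly (poly D [:x:]) y = 0}"
      using \<open>\<And>x y. y \<noteq> 0 \<Longrightarrow> poly (poly D [:x:]) y = 0\<close> by auto
    moreover have "infinite {y. y \<noteq> (0::real)}"
      proof -
      have "{y. y \<noteq> (0::real)} = UNIV - {0}" by auto
      thus ?thesis by (simp add: infinite_UNIV_char_0)
    qed
    ultimately show False by (meson finite_subset)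
  qed
  have "map_poly (\<lambda>c. coeff c j) D = 0" for j
    using c coeff_poly_const[of D _ j] by (metis coeff_0 poly_all_0_iff_0)
  then have "coeff (coeff D i) j = 0" for i j
    by (metis coeff_0 coeff_map_poly coeff_0)
  then have "D = 0" by (metis leading_coeff_0_iff)
  thus ?thesis by (simp add: D_def)
qed


definition hom :: "nat \<Rightarrow> real poly \<Rightarrow> bpoly" where
  "hom n P = (\<Sum>i\<le>n. monom (monom (coeff P i) (n - i)) i)"

definition dehom :: "bpoly \<Rightarrow> real poly" where
  "dehom F = map_poly (\<lambda>q. poly q 1) F"

lemma ev_hom: "ev (hom n P) x y = (\<Sum>i\<le>n. coeff P i * y ^ (n - i) * x ^ i)"
  by (simp add: hom_def ev_sum)

lemma poly_le_sum: "degree (P::real poly) \<le> n \<Longrightarrow> poly P z = (\<Sum>i\<le>n. coeff P i * z ^ i)"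
proof -
  assume a: "degree P \<le> n"
  have "poly P z = (\<Sum>i\<le>degree P. coeff P i * z ^ i)" by (simp add: poly_altdef)
  also have "\<dots> = (\<Sum>i\<le>n. coeff P i * z ^ i)"
    by (rule sum.mono_neutral_left) (use a in \<open>auto simp: coeff_eq_0\<close>)
  finally show ?thesis .
qed

lemma ev_hom_nz:
  assumes "degree P \<le> n" "y \<noteq> 0"
  shows "ev (hom n P) x y = y ^ n * poly P (x / y)"
proof -
  have "y ^ n * poly P (x / y) = (\<Sum>i\<le>n. y ^ n * (coeff P i * (x/y) ^ i))"
    by (simp add: poly_le_sum[OF assms(1)] sum_distrib_left)
  also have "\<dots> = (\<Sum>i\<le>n. coeff P i * y ^ (n - i) * x ^ i)"
  proof (rule sum.cong)
    fix i assume "i \<in> {..n}"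
    then have "y ^ n = y ^ (n - i) * y ^ i" by (simp add: power_add[symmetric])
    thus "y ^ n * (coeff P i * (x / y) ^ i) = coeff P i * y ^ (n - i) * x ^ i"
      using assms(2) by (simp add: power_divide field_simps)
  qed simp
  finally show ?thesis by (simp add: ev_hom)
qed

lemma ev_hom_1: "degree P \<le> n \<Longrightarrow> ev (hom n P) x 1 = poly P x"
  by (simp add: ev_hom_nz)

lemma ev_hom_0: "ev (hom n P) x 0 = coeff P n * x ^ n"
proof -
  have "ev (hom n P) x 0 = (\<Sum>i\<le>n. if i = n then coeff P i * x ^ i else 0)"
    unfolding ev_hom by (rule sum.cong) auto
  thus ?thesis by simp
qed

lemma hom_mult:
  assumes "degree P \<le> n" "degree Q \<le> m"
  shows "hom (n + m) (P * Q) = hom n P * hom m Q"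
proof (rule ev_eqI)
  fix x y :: real assume "y \<noteq> 0"
  have "degree (P * Q) \<le> n + m" using assms degree_mult_le[of P Q] by linarith
  thus "ev (hom (n + m) (P * Q)) x y = ev (hom n P * hom m Q) x y"
    using assms \<open>y \<noteq> 0\<close> by (simp add: ev_hom_nz power_add)
qed

lemma hom_add: "hom n (P + Q) = hom n P + hom n Q"
  by (rule ev_eqI) (simp add: ev_hom algebra_simps sum.distrib)

lemma hom_smult: "hom n (smult c P) = rscale c (hom n P)"
  by (rule ev_eqI) (simp add: ev_hom algebra_simps sum_distrib_left)

lemma coeff_hom: "coeff (hom n P) i = (if i \<le> n then monom (coeff P i) (n - i) else 0)"
  unfolding hom_def coeff_sum by (simp add: coeff_monom)

lemma homogeneous_hom: "homogeneous n (hom n P)"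
  unfolding homogeneous_def coeff_hom by (auto simp: coeff_monom split: if_splits)

lemma homogeneous_coeff:
  assumes "homogeneous n F"
  shows "coeff F i = (if i \<le> n then monom (coeff (coeff F i) (n - i)) (n - i) else 0)"
proof (rule poly_eqI)
  fix j
  show "coeff (coeff F i) j = coeff (if i \<le> n then monom (coeff (coeff F i) (n - i)) (n - i) else 0) j"
  proof (cases "coeff (coeff F i) j = 0")
    case True
    then show ?thesis by (auto simp: coeff_monom)
  next
    case False
    then have "i + j = n" using assms unfolding homogeneous_def by blast
    then show ?thesis by (auto simp: coeff_monom)
  qed
qed

lemma homogeneous_poly1:
  assumes "homogeneous n F" shows "poly (coeff F i) 1 = (if i \<le> n then coeff (coeff F i) (n - i) else 0)"
  by (subst homogeneous_coeff[OF assms]) (simp add: poly_monom)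

lemma degree_dehom: "homogeneous n F \<Longrightarrow> degree (dehom F) \<le> n"
  by (rule degree_le) (auto simp: dehom_def coeff_map_poly homogeneous_poly1)

lemma hom_dehom: assumes "homogeneous n F" shows "hom n (dehom F) = F"
proof (rule poly_eqI)
  fix i
  show "coeff (hom n (dehom F)) i = coeff F i"
    using homogeneous_coeff[OF assms, of i]
    by (auto simp: coeff_hom dehom_def coeff_map_poly homogeneous_poly1[OF assms])
qed

lemma homogeneous_iff_hom: "homogeneous n F \<longleftrightarrow> (\<exists>P. degree P \<le> n \<and> F = hom n P)"
  using hom_dehom degree_dehom homogeneous_hom by metis

lemma homogeneous_mult:
  assumes "homogeneous n F" "homogeneous m G" shows "homogeneous (n + m) (F * G)"
  using assms hom_mult homogeneous_hom homogeneous_iff_hom by metis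

lemma homogeneous_power:
  assumes "homogeneous n F" shows "homogeneous (m * n) (F ^ m)"
proof (induction m)
  case 0
  have "homogeneous 0 (1::bpoly)" by (simp add: homogeneous_def coeff_pCons one_pCons split: nat.splits)
  then show ?case by simp
next
  case (Suc m)
  then show ?case using homogeneous_mult[OF assms Suc] by (simp add: add.commute)
qed

lemma homogeneous_const: "homogeneous 0 [:[:c:]:]"
  by (simp add: homogeneous_def coeff_pCons split: nat.splits)

lemma rscale_conv: "rscale c F = [:[:c:]:] * F"
  by (simp add: rscale_def)

lemma homogeneous_rscale: "homogeneous n F \<Longrightarrow> homogeneous n (rscale c F)"
  using homogeneous_mult[OF homogeneous_const] by (simp add: rscale_conv)


lemma hom_0[simp]: "hom n 0 = 0" by (simp add: hom_def)

lemma poly_map_of_real: "poly (map_poly of_real p) (of_real x :: complex) = of_real (poly p x)"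
  by (induction p) (simp_all add: map_poly_pCons)

lemma eval_form_real: "eval_form F (of_real x) (of_real y) = of_real (ev F x y)"
  unfolding eval_form_def
  by (induction F) (simp_all add: map_poly_pCons ev_pCons poly_map_of_real)

definition lin :: "real \<Rightarrow> real \<Rightarrow> bpoly" where
  "lin x y = (if y \<noteq> 0 then hom 1 [:-x/y, 1:] else hom 1 1)"

lemma lin_dvd:
  assumes "homogeneous n F" "(x, y) \<noteq> (0, 0)" "ev F x y = 0"
  shows "lin x y dvd F"
proof -
  define P where "P = dehom F"
  have F: "F = hom n P" and dP: "degree P \<le> n" using assms(1) hom_dehom degree_dehom P_def by auto
  show ?thesis
  proof (cases "P = 0")
    case True then show ?thesis by (simp add: F)
  next
    case Pnz: False
    show ?thesis
    proof (cases "y = 0")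
      case False
      have "y ^ n * poly P (x / y) = 0" using assms(3) ev_hom_nz[OF dP False] F by simp
      then have "poly P (x / y) = 0" using False by simp
      then obtain Q where Q: "P = [:-(x/y), 1:] * Q" using poly_eq_0_iff_dvd by (metis dvdE)
      have "Q \<noteq> 0" using Pnz Q by auto
      have "degree ([:-(x/y), 1:] * Q) = degree [:-(x/y), 1:] + degree Q"
        by (rule degree_mult_eq) (use \<open>Q \<noteq> 0\<close> in auto)
      then have "degree P = 1 + degree Q" using Q by simp
      then have n: "n = 1 + (n - 1)" and dQ: "degree Q \<le> n - 1" using dP by auto
      have "F = hom (1 + (n - 1)) ([:-(x/y), 1:] * Q)" using F Q n by simp
      also have "\<dots> = hom 1 [:-(x/y), 1:] * hom (n - 1) Q" by (rule hom_mult) (use dQ in auto)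
      finally show ?thesis using False by (simp add: lin_def)
    next
      case True
      then have "x \<noteq> 0" using assms(2) by auto
      have "coeff P n * x ^ n = 0" using assms(3) F True ev_hom_0 by simp
      then have "coeff P n = 0" using \<open>x \<noteq> 0\<close> by simp
      then have "degree P \<noteq> n" using Pnz by (metis leading_coeff_0_iff)
      then have n: "n = 1 + (n - 1)" and dQ: "degree P \<le> n - 1" using dP by auto
      have "F = hom (1 + (n - 1)) (1 * P)" using F n by simp
      also have "\<dots> = hom 1 1 * hom (n - 1) P" by (rule hom_mult) (use dQ in auto)
      finally show ?thesis using True by (simp add: lin_def)
    qed
  qed
qed

lemma lin_not_unit: "\<not> is_unit (lin x y)"
proof
  assume u: "is_unit (lin x y)"
  then obtain c where c: "lin x y = [:c:]" "is_unit c" using is_unit_poly_iff by blast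
  show False
  proof (cases "y = 0")
    case False
    have "coeff (lin x y) 1 = 1" using False by (simp add: lin_def coeff_hom)
    then show False using c(1) by simp
  next
    case True
    have "coeff (lin x y) 0 = monom 1 1" using True
      by (simp add: lin_def coeff_hom)
    then have "c = monom 1 1" using c(1) by simp
    then obtain c' where "monom (1::real) 1 = [:c':]" using c(2) is_unit_poly_iff by metis
    then have "coeff (monom (1::real) 1) 1 = coeff [:c':] 1" by simp
    then show False by simp
  qed
qed

lemma no_common_root:
  assumes "coprime a b" "homogeneous n a" "homogeneous m b" "(x, y) \<noteq> (0, 0)"
    "ev a x y = 0" "ev b x y = 0"
  shows False
  by (meson assms lin_dvd lin_not_unit coprime_common_divisor)



lemma map_poly_cnj_mult: "map_poly cnj (p * q) = map_poly cnj p * map_poly cnj q"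
  by (rule poly_eq_poly_eq_iff[THEN iffD1]) (auto simp: fun_eq_iff)

lemma map_poly_cnj_cnj: "map_poly cnj (map_poly cnj p) = p"
  by (rule poly_eqI) (simp add: coeff_map_poly)

lemma cfact:
  fixes H :: "complex poly"
  assumes "map_poly cnj H = H" "\<forall>x::real. poly H (of_real x) \<noteq> 0"
  shows "\<exists>P. H = smult (lead_coeff H) (P * map_poly cnj P) \<and> lead_coeff P = 1 \<and>
             (\<forall>w. poly P w = 0 \<longrightarrow> Im w > 0)"
  using assms
proof (induction "degree H" arbitrary: H rule: less_induct)
  case less
  show ?case
  proof (cases "degree H = 0")
    case True
    then obtain c where "H = [:c:]" using degree_eq_zeroE by blast
    then show ?thesis by (intro exI[of _ 1]) simp
  next
    case False
    then have "\<not> constant (poly H)" by (simp add: constant_degree)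
    then obtain z where z: "poly H z = 0" using fundamental_theorem_of_algebra by blast
    have real: "\<And>n. coeff H n \<in> \<real>"
      using less.prems(1) by (metis Reals_cnj_iff coeff_map_poly complex_cnj_zero)
    have "Im z \<noteq> 0"
    proof
      assume "Im z = 0"
      then have "z = of_real (Re z)" by (simp add: complex_eq_iff)
      then show False using z less.prems(2) by metis
    qed
    define z' where "z' = (if Im z > 0 then z else cnj z)"
    have z'pos: "Im z' > 0" using \<open>Im z \<noteq> 0\<close> by (auto simp: z'_def)
    have r1: "poly H z' = 0" using z real_poly_cnj_root_iff[OF real] by (auto simp: z'_def)
    have r2: "poly H (cnj z') = 0" using r1 real_poly_cnj_root_iff[OF real] by simp
    obtain H1 where H1: "H = [:-z', 1:] * H1" using r1 poly_eq_0_iff_dvd by (metis dvdE)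
    have "cnj z' \<noteq> z'" using z'pos by (auto simp: complex_eq_iff)
    then have "poly H1 (cnj z') = 0" using r2 H1 by simp
    then obtain H2 where H2: "H1 = [:-cnj z', 1:] * H2" using poly_eq_0_iff_dvd by (metis dvdE)
    define Q where "Q = [:-z', 1:] * [:-cnj z', 1:]"
    have HQ: "H = Q * H2" unfolding Q_def H1 H2 by (simp only: mult.assoc)
    have cQ: "map_poly cnj Q = Q"
      by (simp add: Q_def map_poly_cnj_mult map_poly_pCons mult.commute)
    have Qnz: "Q \<noteq> 0" by (simp add: Q_def)
    have "Q * map_poly cnj H2 = Q * H2"
      using less.prems(1) HQ by (metis cQ map_poly_cnj_mult)
    then have cH2: "map_poly cnj H2 = H2" using Qnz by simp
    have H2nz: "H2 \<noteq> 0" using HQ less.prems(2) by (metis mult_zero_right poly_0)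
    have dQ: "degree Q = 2" by (simp add: Q_def degree_mult_eq)
    have dH: "degree H = degree Q + degree H2" using HQ Qnz H2nz by (simp add: degree_mult_eq)
    have nr2: "\<forall>x::real. poly H2 (of_real x) \<noteq> 0" using less.prems(2) HQ by auto
    obtain P2 where P2: "H2 = smult (lead_coeff H2) (P2 * map_poly cnj P2)" "lead_coeff P2 = 1"
      "\<forall>w. poly P2 w = 0 \<longrightarrow> Im w > 0"
      using less.hyps[of H2] dH dQ cH2 nr2 by auto
    define P where "P = [:-z', 1:] * P2"
    have lQ: "lead_coeff Q = 1" by (simp add: Q_def lead_coeff_mult)
    have "H = smult (lead_coeff H) (P * map_poly cnj P)"
    proof -
      have lc: "lead_coeff H = lead_coeff H2" using HQ lQ by (simp add: lead_coeff_mult)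
      have "map_poly cnj P = [:-cnj z', 1:] * map_poly cnj P2"
        unfolding P_def map_poly_cnj_mult by (simp add: map_poly_pCons)
      then have e2: "P * map_poly cnj P = Q * (P2 * map_poly cnj P2)"
        unfolding P_def Q_def by (simp only: ac_simps)
      have "H = Q * smult (lead_coeff H2) (P2 * map_poly cnj P2)" using HQ P2(1) by metis
      also have "\<dots> = smult (lead_coeff H2) (Q * (P2 * map_poly cnj P2))" by (rule mult_smult_right)
      finally have X: "H = smult (lead_coeff H2) (Q * (P2 * map_poly cnj P2))" .
      show ?thesis unfolding e2 lc by (rule X)
    qed
    moreover have "lead_coeff P = 1" unfolding P_def lead_coeff_mult using P2(2) by simp
    moreover have "\<forall>w. poly P w = 0 \<longrightarrow> Im w > 0" using P2(3) z'pos by (auto simp: P_def)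
    ultimately show ?thesis by blast
  qed
qed


abbreviation ofr :: "real poly \<Rightarrow> complex poly" where "ofr \<equiv> map_poly of_real"

lemma ofr_mult: "ofr (p * q) = ofr p * ofr q"
  by (rule poly_eqI) (simp add: coeff_mult coeff_map_poly)

lemma ofr_add: "ofr (p + q) = ofr p + ofr q"
  by (rule poly_eqI) (simp add: coeff_map_poly)

lemma ofr_smult: "ofr (smult c p) = smult (of_real c) (ofr p)"
  by (rule poly_eqI) (simp add: coeff_map_poly)

lemma ofr_inj: "ofr p = ofr q \<Longrightarrow> p = q"
  by (rule poly_eqI) (metis coeff_map_poly of_real_0 of_real_eq_iff)

lemma rfact:
  fixes H :: "real poly"
  assumes nr: "\<forall>x. poly H x \<noteq> 0"
  shows "\<exists>A B c j. c \<noteq> 0 \<and> H = smult c (A\<^sup>2 + B\<^sup>2) \<and> degree A = j \<and> degree B \<le> j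
           \<and> degree H = 2 * j \<and> coprime A B \<and> A \<noteq> 0"
proof -
  define HC where "HC = ofr H"
  have cHC: "map_poly cnj HC = HC"
    by (rule poly_eqI) (simp add: HC_def coeff_map_poly)
  have nrC: "\<forall>x::real. poly HC (of_real x) \<noteq> 0"
    using nr by (simp add: HC_def poly_map_of_real)
  obtain P where P: "HC = smult (lead_coeff HC) (P * map_poly cnj P)" "lead_coeff P = 1"
    "\<forall>w. poly P w = 0 \<longrightarrow> Im w > 0"
    using cfact[OF cHC nrC] by blast
  define A where "A = map_poly Re P"
  define B where "B = map_poly Im P"
  have PAB: "P = ofr A + smult \<i> (ofr B)"
    by (rule poly_eqI) (simp add: A_def B_def coeff_map_poly complex_eq_iff)
  have cPAB: "map_poly cnj P = ofr A - smult \<i> (ofr B)"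
    by (rule poly_eqI) (simp add: A_def B_def coeff_map_poly complex_eq_iff)
  have PcP: "P * map_poly cnj P = ofr (A\<^sup>2 + B\<^sup>2)"
  proof -
    have "P * map_poly cnj P = (ofr A + smult \<i> (ofr B)) * (ofr A - smult \<i> (ofr B))"
      by (simp only: cPAB, simp only: PAB)
    also have "\<dots> = ofr A * ofr A - smult (\<i> * \<i>) (ofr B * ofr B)"
      by (simp add: algebra_simps)
    also have "\<dots> = ofr A * ofr A + ofr B * ofr B" by simp
    finally show ?thesis by (simp add: power2_eq_square ofr_mult ofr_add)
  qed
  have Hnz: "H \<noteq> 0" using nr by auto
  define c where "c = lead_coeff H"
  have cnz: "c \<noteq> 0" using Hnz by (simp add: c_def)
  have lHC: "lead_coeff HC = of_real c"
    unfolding HC_def c_def by (simp add: degree_map_poly coeff_map_poly)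
  have "ofr H = ofr (smult c (A\<^sup>2 + B\<^sup>2))"
  proof -
    have "HC = smult (of_real c) (ofr (A\<^sup>2 + B\<^sup>2))" using P(1) unfolding lHC PcP .
    thus ?thesis by (simp add: HC_def ofr_smult)
  qed
  then have H: "H = smult c (A\<^sup>2 + B\<^sup>2)" by (rule ofr_inj)
  define j where "j = degree P"
  have cA: "coeff A j = 1" using P(2) by (simp add: A_def j_def coeff_map_poly)
  have dA: "degree A = j"
  proof (rule antisym)
    show "degree A \<le> j" unfolding A_def j_def by (rule degree_le) (simp add: coeff_map_poly coeff_eq_0)
    show "j \<le> degree A" using cA by (metis le_degree zero_neq_one)
  qed
  have dB: "degree B \<le> j" unfolding B_def j_def by (rule degree_le) (simp add: coeff_map_poly coeff_eq_0)
  have dcP: "degree (map_poly cnj P) = degree P"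
    by (rule map_poly_degree_eq) (simp add: P(2))
  have Pnz: "P \<noteq> 0" using P(2) by auto
  have cPnz: "map_poly cnj P \<noteq> 0" using cPAB dcP Pnz
    by (metis map_poly_0 map_poly_cnj_cnj)
  have "degree HC = 2 * j"
  proof -
    have "lead_coeff HC \<noteq> 0" using lHC cnz by simp
    then have "degree HC = degree (P * map_poly cnj P)"
      using P(1) by (metis degree_smult_eq of_real_eq_0_iff lHC cnz)
    also have "\<dots> = 2 * j" using Pnz cPnz dcP by (simp add: degree_mult_eq j_def)
    finally show ?thesis .
  qed
  then have dH: "degree H = 2 * j" unfolding HC_def
    by (metis degree_map_poly of_real_eq_0_iff)
  have "coprime A B"
  proof (rule ccontr)
    assume "\<not> coprime A B"
    then obtain G where G: "G dvd A" "G dvd B" "\<not> is_unit G" by (rule not_coprimeE)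
    have Anz: "A \<noteq> 0" using cA by auto
    have Gnz: "G \<noteq> 0" using G(1) Anz by auto
    have "degree G \<noteq> 0" using G(3) is_unit_iff_degree[OF Gnz] by simp
    then have "degree (ofr G) \<noteq> 0" by (metis degree_map_poly of_real_eq_0_iff)
    then have "\<not> constant (poly (ofr G))" by (simp add: constant_degree)
    then obtain w where w: "poly (ofr G) w = 0" using fundamental_theorem_of_algebra by blast
    obtain KA where "A = G * KA" using G(1) by (rule dvdE)
    then have wA: "poly (ofr A) w = 0" using w by (simp add: ofr_mult)
    obtain KB where "B = G * KB" using G(2) by (rule dvdE)
    then have wB: "poly (ofr B) w = 0" using w by (simp add: ofr_mult)
    have "poly P w = 0" unfolding PAB using wA wB by simp
    then have i1: "Im w > 0" using P(3) by blast
    have "poly (map_poly cnj P) w = 0" unfolding cPAB using wA wB by simp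
    then have "poly P (cnj w) = 0" by simp
    then have "Im (cnj w) > 0" using P(3) by blast
    then show False using i1 by simp
  qed
  have "A \<noteq> 0" using cA by auto
  show ?thesis using cnz H dA dB dH \<open>coprime A B\<close> \<open>A \<noteq> 0\<close> by blast
qed



lemma bez:
  fixes A B T :: "real poly"
  assumes "coprime A B" "A \<noteq> 0" "degree A = j" "degree B \<le> j" "degree T \<le> 2 * j"
  shows "\<exists>\<alpha> \<beta>. degree \<alpha> \<le> j \<and> degree \<beta> \<le> j \<and> T = A * \<alpha> + B * \<beta>"
proof -
  define x where "x = fst (bezout_coefficients A B)"
  define y where "y = snd (bezout_coefficients A B)"
  have xy: "x * A + y * B = 1"
    using bezout_coefficients_fst_snd[of A B] assms(1) by (simp add: x_def y_def)
  define \<beta> where "\<beta> = (T * y) mod A"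
  define q where "q = (T * y) div A"
  have Ty: "T * y = A * q + \<beta>" by (simp add: q_def \<beta>_def mult.commute)
  define \<alpha> where "\<alpha> = T * x + B * q"
  have eq: "T = A * \<alpha> + B * \<beta>"
  proof -
    have "T = T * (x * A + y * B)" using xy by simp
    also have "\<dots> = A * (T * x) + B * (T * y)" by (simp add: algebra_simps)
    also have "\<dots> = A * \<alpha> + B * \<beta>" unfolding Ty \<alpha>_def by (simp add: algebra_simps)
    finally show ?thesis .
  qed
  have db: "degree \<beta> \<le> j"
    using degree_mod_less[OF assms(2), of "T * y"] assms(3) by (auto simp: \<beta>_def)
  have "degree (A * \<alpha>) \<le> 2 * j"
  proof -
    have "A * \<alpha> = T - B * \<beta>" using eq by simp
    moreover have "degree (B * \<beta>) \<le> 2 * j" using degree_mult_le[of B \<beta>] db assms(4) by linarith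
    ultimately show ?thesis using assms(5) by (metis degree_diff_le)
  qed
  then have da: "degree \<alpha> \<le> j"
    using assms(2,3) by (cases "\<alpha> = 0") (auto simp: degree_mult_eq)
  show ?thesis using da db eq by blast
qed


lemma hom_X1: "hom 1 [:0, 1:] = X1"
  by (rule poly_eqI) (auto simp: coeff_hom X1_def coeff_pCons split: nat.splits)

lemma hom_X1_pow: "hom n ([:0, 1:] ^ n) = X1 ^ n"
proof (induction n)
  case 0
  show ?case by (rule poly_eqI) (simp add: coeff_hom)
next
  case (Suc n)
  have d: "degree ([:0, 1::real:] ^ n) \<le> n" using degree_power_le[of "[:0,1::real:]" n] by simp
  have "hom (Suc n) ([:0, 1:] ^ Suc n) = hom (1 + n) ([:0, 1:] * [:0, 1:] ^ n)" by simp
  also have "\<dots> = hom 1 [:0, 1:] * hom n ([:0, 1:] ^ n)" by (rule hom_mult) (use d in auto)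
  finally show ?case using Suc hom_X1 by simp
qed

lemma h_decomp:
  assumes hk: "homogeneous k h" and nz: "\<forall>x y. (x, y) \<noteq> (0, 0) \<longrightarrow> ev h x y \<noteq> 0"
  shows "\<exists>a b \<alpha> \<beta> c j. c \<noteq> 0 \<and> k = 2 * j \<and> homogeneous j a \<and> homogeneous j b \<and>
            homogeneous j \<alpha> \<and> homogeneous j \<beta> \<and> h = rscale c (a\<^sup>2 + b\<^sup>2) \<and> X1 ^ k = a * \<alpha> + b * \<beta>"
proof -
  define H where "H = dehom h"
  have hH: "h = hom k H" and dH: "degree H \<le> k" using hk hom_dehom degree_dehom H_def by auto
  have nr: "\<forall>x. poly H x \<noteq> 0"
  proof
    fix x
    have "ev h x 1 \<noteq> 0" using nz by auto
    thus "poly H x \<noteq> 0" using ev_hom_1[OF dH] hH by simp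
  qed
  have "ev h 1 0 \<noteq> 0" using nz by auto
  then have "coeff H k \<noteq> 0" using hH ev_hom_0 by simp
  then have dHk: "degree H = k" using dH le_degree by (metis antisym)
  obtain A B c j where ABc: "c \<noteq> 0" "H = smult c (A\<^sup>2 + B\<^sup>2)" "degree A = j" "degree B \<le> j"
    "degree H = 2 * j" "coprime A B" and Anz: "A \<noteq> 0"
    using rfact[OF nr] by blast
  have k: "k = 2 * j" using dHk ABc(5) by simp
  have dT: "degree ([:0, 1::real:] ^ k) \<le> 2 * j" using k degree_power_le[of "[:0,1::real:]" k] by simp
  obtain \<alpha> \<beta> where ab: "degree \<alpha> \<le> j" "degree \<beta> \<le> j" "[:0, 1:] ^ k = A * \<alpha> + B * \<beta>"
    using bez[OF ABc(6) Anz ABc(3) ABc(4) dT] by blast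
  have dA: "degree A \<le> j" using ABc(3) by simp
  have "h = hom (j + j) (smult c (A * A + B * B))" using hH ABc(2) k by (simp add: power2_eq_square mult_2)
  also have "\<dots> = rscale c (hom j A * hom j A + hom j B * hom j B)"
    by (simp add: hom_smult hom_add hom_mult dA ABc(4))
  finally have h1: "h = rscale c ((hom j A)\<^sup>2 + (hom j B)\<^sup>2)" by (simp add: power2_eq_square)
  have "X1 ^ k = hom (j + j) (A * \<alpha> + B * \<beta>)" using hom_X1_pow[of k] ab(3) k by (simp add: mult_2)
  also have "\<dots> = hom j A * hom j \<alpha> + hom j B * hom j \<beta>"
    by (simp add: hom_add hom_mult dA ABc(4) ab(1,2))
  finally have X: "X1 ^ k = hom j A * hom j \<alpha> + hom j B * hom j \<beta>" .
  show ?thesis using h1 X k ABc(1) homogeneous_hom by blast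
qed



lemma quad_zero:
  fixes b c :: real
  assumes "\<forall>t. 0 \<le> 2 * t * b + t * t * c"
  shows "b = 0"
proof (rule ccontr)
  assume bnz: "b \<noteq> 0"
  define m where "m = \<bar>c\<bar> + 1"
  have m: "m > 0" "\<bar>c\<bar> \<le> m" by (auto simp: m_def)
  define t where "t = - b / m"
  have "0 \<le> 2 * t * b + t * t * c" using assms by blast
  also have "t * t * c \<le> t * t * \<bar>c\<bar>" by (simp add: mult_left_mono)
  also have "t * t * \<bar>c\<bar> \<le> t * t * m" using m by (simp add: mult_left_mono)
  also have "2 * t * b + t * t * m = - b * b / m"
    using m by (simp add: t_def field_simps power2_eq_square)
  finally have "0 \<le> - b * b / m" by simp
  moreover have "b * b > 0" using bnz by (metis not_real_square_gt_zero)
  then have "b * b / m > 0" using m(1) by (rule divide_pos_pos)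
  ultimately show False by simp
qed

lemma rscale_mult: "rscale c X * rscale c' Y = rscale (c * c') (X * Y)"
  by (simp add: rscale_def mult_smult_left mult_smult_right)

lemma rscale_1: "rscale 1 X = X" by (simp add: rscale_def one_pCons[symmetric])

lemma homogeneous_sq: "homogeneous n F \<Longrightarrow> homogeneous (2 * n) (F\<^sup>2)"
  using homogeneous_power[of n F 2] by simp

lemma sos_in_forms: "p \<in> sos_forms d \<Longrightarrow> homogeneous (2 * d) p"
proof -
  assume "p \<in> sos_forms d"
  then obtain qs where qs: "set qs \<subseteq> forms d" "p = sum_list (map (\<lambda>q. q ^ 2) qs)"
    by (auto simp: sos_forms_def)
  have "homogeneous (2 * d) (sum_list (map (\<lambda>q. q ^ 2) qs))" using qs(1)
    by (induction qs) (auto simp: forms_def intro!: homogeneous_add homogeneous_sq)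
  thus ?thesis using qs(2) by simp
qed

lemma deg_aux:
  assumes "homogeneous n F" "homogeneous k h" "h \<noteq> 0" "homogeneous d (F * h)"
  shows "homogeneous (d - k) F \<and> (F \<noteq> 0 \<longrightarrow> k \<le> d)"
proof (cases "F = 0")
  case True then show ?thesis by simp
next
  case False
  have "homogeneous (n + k) (F * h)" using assms(1,2) by (rule homogeneous_mult)
  moreover have "F * h \<noteq> 0" using False assms(3) by simp
  ultimately have "n + k = d" using assms(4) homogeneous_unique by blast
  then have "d - k = n" by simp
  then show ?thesis using assms(1) \<open>n + k = d\<close> by simp
qed



theorem proposition4p4:
  fixes d k :: nat and ip :: "bpoly \<Rightarrow> bpoly \<Rightarrow> real"
    and u1 u2 p g h u1' u2' :: bpoly
  assumes ip: "inner_product_on (2 * d) ip"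
    and u1: "u1 \<in> forms d" and u2: "u2 \<in> forms d"
    and p: "p \<in> sos_forms d"
    and grad: "grad_zero d ip p (u1, u2)"
    and hess: "hess_psd d ip p (u1, u2)"
    and forms: "is_form g" "is_form u1'" "is_form u2'"
    and hk: "homogeneous k h"
    and fact1: "u1 = u1' * g * h" and fact2: "u2 = u2' * g * h"
    and gcd_u: "is_gcd (g * h) u1 u2"
    and cop1: "coprime u1' u2'"
    and cop2: "coprime (u1'\<^sup>2 + u2'\<^sup>2) g"
    and roots: "\<forall>z. is_root h z \<longrightarrow> is_root (u1'\<^sup>2 + u2'\<^sup>2) z"
    and mem: "p \<in> set_plus_b (A_image d (u1' * g * X1 ^ k, u2' * g * X1 ^ k))
                              (cone_of (sigma ` A_kernel d (u1, u2)))"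
  shows "f_obj ip p (u1, u2) = 0"
proof -
  define N where "N = 2 * d"
  define r where "r = sigma (u1, u2) - p"
  define s' where "s' = u1'\<^sup>2 + u2'\<^sup>2"
  define L where "L = (\<lambda>x. ip x r)"
  have hu1: "homogeneous d u1" and hu2: "homogeneous d u2" using u1 u2 by (auto simp: forms_def)
  have hsig: "homogeneous N (sigma (x, y))" if "homogeneous d x" "homogeneous d y" for x y
    using homogeneous_add[OF homogeneous_sq[OF that(1)] homogeneous_sq[OF that(2)]]
    by (simp add: sigma_def N_def)
  have hp: "homogeneous N p" using sos_in_forms[OF p] by (simp add: N_def)
  have hr: "homogeneous N r" unfolding r_def by (rule homogeneous_diff[OF hsig[OF hu1 hu2] hp])
  have ipsym: "ip x y = ip y x" if "homogeneous N x" "homogeneous N y" for x y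
    using ip that by (auto simp: inner_product_on_def forms_def N_def)
  have ipadd: "ip (x + y) z = ip x z + ip y z" if "homogeneous N x" "homogeneous N y" "homogeneous N z" for x y z
    using ip that by (auto simp: inner_product_on_def forms_def N_def)
  have ipsc: "ip (rscale c x) y = c * ip x y" if "homogeneous N x" "homogeneous N y" for c x y
    using ip that by (auto simp: inner_product_on_def forms_def N_def)
  have ippos: "ip x x > 0" if "homogeneous N x" "x \<noteq> 0" for x
    using ip that by (auto simp: inner_product_on_def forms_def N_def)
  have ip0: "ip 0 y = 0" if "homogeneous N y" for y
    using ipsc[where c=0 and x=0 and y=y] that by (simp add: rscale_def)
  have Ladd: "L (x + y) = L x + L y" if "homogeneous N x" "homogeneous N y" for x y
    using ipadd[OF that hr] by (simp add: L_def)
  have Lsc: "L (rscale c x) = c * L x" if "homogeneous N x" for c x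
    using ipsc[OF that hr] by (simp add: L_def)
  have L0: "L 0 = 0" using ip0[OF hr] by (simp add: L_def)
  have Hess: "L (sigma v) + 2 * ip (A_op (u1, u2) v) (A_op (u1, u2) v) \<ge> 0"
    if "homogeneous d (fst v)" "homogeneous d (snd v)" for v
  proof -
    have "v \<in> Collect (homogeneous d) \<times> Collect (homogeneous d)" using that by (simp add: mem_Times_iff)
    then show ?thesis using hess unfolding hess_psd_def forms_def L_def r_def by blast
  qed
  have Grad: "L (A_op (u1, u2) v) = 0"
    if "homogeneous d (fst v)" "homogeneous d (snd v)" for v
  proof -
    have "v \<in> Collect (homogeneous d) \<times> Collect (homogeneous d)" using that by (simp add: mem_Times_iff)
    then show ?thesis using grad unfolding grad_zero_def forms_def L_def r_def by blast
  qed
  have hA: "homogeneous N (A_op a v)"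
    if "homogeneous d (fst a)" "homogeneous d (snd a)" "homogeneous d (fst v)" "homogeneous d (snd v)" for a v
    unfolding A_op_def N_def mult_2
    by (intro homogeneous_add homogeneous_mult that)

  obtain e1 where e1: "homogeneous e1 u1'" using forms(2) by (auto simp: is_form_def)
  obtain e2 where e2: "homogeneous e2 u2'" using forms(3) by (auto simp: is_form_def)
  obtain dg where dg: "homogeneous dg g" using forms(1) by (auto simp: is_form_def)
  have nz: "\<forall>x y. (x, y) \<noteq> (0, 0) \<longrightarrow> ev h x y \<noteq> 0"
  proof (intro allI impI)
    fix x y :: real assume xy: "(x, y) \<noteq> (0, 0)"
    show "ev h x y \<noteq> 0"
    proof
      assume h0: "ev h x y = 0"
      have "(complex_of_real x, complex_of_real y) \<noteq> (0, 0)" using xy by simp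
      then have "is_root h (of_real x, of_real y)" using h0 by (simp add: is_root_def eval_form_real)
      then have "is_root s' (of_real x, of_real y)" using roots by (simp add: s'_def)
      then have "ev s' x y = 0" by (simp add: is_root_def eval_form_real)
      then have "(ev u1' x y)\<^sup>2 + (ev u2' x y)\<^sup>2 = 0" by (simp add: s'_def)
      then have "ev u1' x y = 0" "ev u2' x y = 0" by (simp_all add: sum_power2_eq_zero_iff)
      then show False using no_common_root[OF cop1 e1 e2 xy] by blast
    qed
  qed
  have hnz: "h \<noteq> 0" using nz by (metis ev_0 prod.inject zero_neq_one)
  have key: "L (A_op (u1' * g * X1 ^ k, u2' * g * X1 ^ k) v) = 0"
    if "homogeneous d (fst v)" "homogeneous d (snd v)" for v
  proof (cases "g = 0")
    case True then show ?thesis by (simp add: A_op_def L0)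
  next
    case gnz: False
    have "u1' \<noteq> 0 \<or> u2' \<noteq> 0" using cop1 by auto
    then have some: "u1' * g \<noteq> 0 \<or> u2' * g \<noteq> 0" using gnz by auto
    have d1: "homogeneous (d - k) (u1' * g) \<and> (u1' * g \<noteq> 0 \<longrightarrow> k \<le> d)"
      by (rule deg_aux[OF homogeneous_mult[OF e1 dg] hk hnz]) (use hu1 fact1 in simp)
    have d2: "homogeneous (d - k) (u2' * g) \<and> (u2' * g \<noteq> 0 \<longrightarrow> k \<le> d)"
      by (rule deg_aux[OF homogeneous_mult[OF e2 dg] hk hnz]) (use hu2 fact2 in simp)
    have kd: "k \<le> d" using some d1 d2 by blast
    have hg1: "homogeneous (d - k) (u1' * g)" and hg2: "homogeneous (d - k) (u2' * g)" using d1 d2 by auto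
    have hgm: "homogeneous d (u1' * g * \<mu>)" "homogeneous d (u2' * g * \<mu>)" if "homogeneous k \<mu>" for \<mu>
      using homogeneous_mult[OF hg1 that] homogeneous_mult[OF hg2 that] kd by simp_all
    define \<kappa> where "\<kappa> \<mu> = (- (g * \<mu> * u2'), g * \<mu> * u1')" for \<mu>
    have h\<kappa>: "homogeneous d (fst (\<kappa> \<mu>))" "homogeneous d (snd (\<kappa> \<mu>))" if "homogeneous k \<mu>" for \<mu>
    proof -
      have eqs: "g * \<mu> * u2' = u2' * g * \<mu>" "g * \<mu> * u1' = u1' * g * \<mu>" by (simp_all add: ac_simps)
      show "homogeneous d (fst (\<kappa> \<mu>))" "homogeneous d (snd (\<kappa> \<mu>))"
        using hgm[OF that] unfolding \<kappa>_def fst_conv snd_conv eqs by (simp_all add: homogeneous_uminus)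
    qed
    have A\<kappa>: "A_op (u1, u2) (\<kappa> \<mu>) = 0" for \<mu>
      by (simp add: A_op_def \<kappa>_def fact1 fact2 algebra_simps)
    have \<sigma>\<kappa>: "sigma (\<kappa> \<mu>) = g\<^sup>2 * \<mu>\<^sup>2 * s'" for \<mu>
      by (simp add: sigma_def \<kappa>_def s'_def algebra_simps power2_eq_square)
    define q where "q \<mu> = L (g\<^sup>2 * \<mu>\<^sup>2 * s')" for \<mu>
    have hq: "homogeneous N (g\<^sup>2 * \<mu>\<^sup>2 * s')" if "homogeneous k \<mu>" for \<mu>
      using hsig[OF h\<kappa>[OF that]] \<sigma>\<kappa>[of \<mu>] by simp
    have qnn: "q \<mu> \<ge> 0" if "homogeneous k \<mu>" for \<mu>
    proof -
      have "homogeneous N 0" by simp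
      then show ?thesis using Hess[OF h\<kappa>[OF that]] A\<kappa>[of \<mu>] \<sigma>\<kappa>[of \<mu>] ip0 by (simp add: q_def)
    qed
    have qpair: "q \<mu> = 0"
      if "homogeneous k \<mu>" "homogeneous k \<mu>'" "homogeneous k \<rho>" "\<mu>\<^sup>2 + \<mu>'\<^sup>2 = h * \<rho>" for \<mu> \<mu>' \<rho>
    proof -
      define v where "v = (u1' * g * \<rho>, u2' * g * \<rho>)"
      have hv: "homogeneous d (fst v)" "homogeneous d (snd v)" using hgm[OF that(3)] by (simp_all add: v_def)
      have "A_op (u1, u2) v = g\<^sup>2 * (h * \<rho>) * s'"
        by (simp add: A_op_def v_def fact1 fact2 s'_def algebra_simps power2_eq_square)
      also have "\<dots> = g\<^sup>2 * \<mu>\<^sup>2 * s' + g\<^sup>2 * \<mu>'\<^sup>2 * s'" using that(4)[symmetric] by (simp add: algebra_simps)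
      finally have "L (g\<^sup>2 * \<mu>\<^sup>2 * s' + g\<^sup>2 * \<mu>'\<^sup>2 * s') = 0" using Grad[OF hv] by simp
      then have "q \<mu> + q \<mu>' = 0" using Ladd[OF hq[OF that(1)] hq[OF that(2)]] by (simp add: q_def)
      then show ?thesis using qnn[OF that(1)] qnn[OF that(2)] by simp
    qed
    have h\<phi>: "homogeneous N (g * \<mu> * (u1' * z2 - u2' * z1))"
      if "homogeneous k \<mu>" "homogeneous d z1" "homogeneous d z2" for \<mu> z1 z2
    proof -
      have "g * \<mu> * (u1' * z2 - u2' * z1) = (u1' * g * \<mu>) * z2 - (u2' * g * \<mu>) * z1"
        by (simp add: algebra_simps)
      then show ?thesis using hgm[OF that(1)] that(2,3)
        by (simp add: N_def mult_2 homogeneous_diff homogeneous_mult)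
    qed
    have qnull: "L (g * \<mu> * (u1' * z2 - u2' * z1)) = 0"
      if "homogeneous k \<mu>" "q \<mu> = 0" "homogeneous d z1" "homogeneous d z2" for \<mu> z1 z2
    proof -
      define \<kappa>1 where "\<kappa>1 = fst (\<kappa> \<mu>)"
      define \<kappa>2 where "\<kappa>2 = snd (\<kappa> \<mu>)"
      have h\<kappa>1: "homogeneous d \<kappa>1" and h\<kappa>2: "homogeneous d \<kappa>2"
        using h\<kappa>[OF that(1)] by (simp_all add: \<kappa>1_def \<kappa>2_def)
      define \<phi> where "\<phi> = \<kappa>1 * z1 + \<kappa>2 * z2"
      define \<psi> where "\<psi> = sigma (z1, z2)"
      define Az where "Az = A_op (u1, u2) (z1, z2)"
      have \<phi>eq: "\<phi> = g * \<mu> * (u1' * z2 - u2' * z1)"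
        by (simp add: \<phi>_def \<kappa>1_def \<kappa>2_def \<kappa>_def algebra_simps)
      have h\<phi>': "homogeneous N \<phi>" using h\<phi>[OF that(1,3,4)] \<phi>eq by simp
      have h\<psi>: "homogeneous N \<psi>" using hsig[OF that(3,4)] by (simp add: \<psi>_def)
      have hAz: "homogeneous N Az" using hA[of "(u1, u2)" "(z1, z2)"] hu1 hu2 that(3,4) by (simp add: Az_def)
      have h\<sigma>\<kappa>: "homogeneous N (sigma (\<kappa> \<mu>))" using hsig[OF h\<kappa>[OF that(1)]] by simp
      have L\<sigma>\<kappa>: "L (sigma (\<kappa> \<mu>)) = 0" using that(2) \<sigma>\<kappa>[of \<mu>] by (simp add: q_def)
      have ineq: "0 \<le> 2 * t * L \<phi> + t * t * (L \<psi> + 2 * ip Az Az)" for t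
      proof -
        define vt where "vt = (\<kappa>1 + rscale t z1, \<kappa>2 + rscale t z2)"
        have hvt: "homogeneous d (fst vt)" "homogeneous d (snd vt)"
          using h\<kappa>1 h\<kappa>2 that(3,4) by (simp_all add: vt_def homogeneous_add homogeneous_rscale)
        have "sigma vt = sigma (\<kappa> \<mu>) + rscale t (\<phi> + \<phi>) + rscale t (rscale t \<psi>)"
          by (simp add: vt_def sigma_def rscale_conv \<kappa>1_def \<kappa>2_def \<phi>_def \<psi>_def algebra_simps power2_eq_square)
        moreover
        have hY: "homogeneous N (rscale t (\<phi> + \<phi>))" by (rule homogeneous_rscale[OF homogeneous_add[OF h\<phi>' h\<phi>']])
        have hZ: "homogeneous N (rscale t (rscale t \<psi>))" using h\<psi> by (simp add: homogeneous_rscale)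
        have "L (sigma (\<kappa> \<mu>) + rscale t (\<phi> + \<phi>) + rscale t (rscale t \<psi>))
              = L (sigma (\<kappa> \<mu>)) + L (rscale t (\<phi> + \<phi>)) + L (rscale t (rscale t \<psi>))"
          using Ladd[OF homogeneous_add[OF h\<sigma>\<kappa> hY] hZ] Ladd[OF h\<sigma>\<kappa> hY] by simp
        moreover have "L (rscale t (\<phi> + \<phi>)) = t * (L \<phi> + L \<phi>)"
          using Lsc[OF homogeneous_add[OF h\<phi>' h\<phi>']] Ladd[OF h\<phi>' h\<phi>'] by simp
        moreover have "L (rscale t (rscale t \<psi>)) = t * (t * L \<psi>)"
          using Lsc[OF homogeneous_rscale[OF h\<psi>]] Lsc[OF h\<psi>] by simp
        ultimately have Ls: "L (sigma vt) = t * (L \<phi> + L \<phi>) + t * (t * L \<psi>)"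
          using L\<sigma>\<kappa> by simp
        have "A_op (u1, u2) vt = A_op (u1, u2) (\<kappa> \<mu>) + rscale t Az"
          by (simp add: A_op_def vt_def Az_def rscale_conv \<kappa>1_def \<kappa>2_def algebra_simps)
        then have Avt: "A_op (u1, u2) vt = rscale t Az" using A\<kappa>[of \<mu>] by simp
        have "ip (rscale t Az) (rscale t Az) = t * (t * ip Az Az)"
          using ipsc[OF hAz homogeneous_rscale[OF hAz]] ipsym[OF hAz homogeneous_rscale[OF hAz]] ipsc[OF hAz hAz]
          by simp
        then show ?thesis using Hess[OF hvt] Ls Avt by (simp add: algebra_simps)
      qed
      have "L \<phi> = 0" by (rule quad_zero) (use ineq in blast)
      then show ?thesis using \<phi>eq by simp
    qed
    obtain a b \<alpha> \<beta> c j where dec: "c \<noteq> 0" "k = 2 * j" "homogeneous j a" "homogeneous j b"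
        "homogeneous j \<alpha>" "homogeneous j \<beta>" "h = rscale c (a\<^sup>2 + b\<^sup>2)" "X1 ^ k = a * \<alpha> + b * \<beta>"
      using h_decomp[OF hk nz] by blast
    have hprod: "homogeneous k (x * y)" if "homogeneous j x" "homogeneous j y" for x y
      using homogeneous_mult[OF that] dec(2) by (simp add: mult_2)
    have hrho: "homogeneous k (rscale (1 / c) (y\<^sup>2))" if "homogeneous j y" for y
      using homogeneous_rscale[OF homogeneous_sq[OF that]] dec(2) by simp
    have heq: "(x * y)\<^sup>2 + (z * y)\<^sup>2 = h * rscale (1 / c) (y\<^sup>2)" if "x = a \<and> z = b \<or> x = b \<and> z = a" for x y z
    proof -
      have "h * rscale (1 / c) (y\<^sup>2) = rscale 1 ((a\<^sup>2 + b\<^sup>2) * y\<^sup>2)"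
        using dec(1) by (simp add: dec(7) rscale_mult)
      then show ?thesis using that by (auto simp: rscale_1 algebra_simps power2_eq_square)
    qed
    have q1: "q (a * \<alpha>) = 0"
      by (rule qpair[OF hprod[OF dec(3,5)] hprod[OF dec(4,5)] hrho[OF dec(5)] heq]) simp
    have q2: "q (b * \<beta>) = 0"
      by (rule qpair[OF hprod[OF dec(4,6)] hprod[OF dec(3,6)] hrho[OF dec(6)] heq]) simp
    define z1 where "z1 = - snd v"
    define z2 where "z2 = fst v"
    have hz: "homogeneous d z1" "homogeneous d z2" using that by (simp_all add: z1_def z2_def homogeneous_uminus)
    have "A_op (u1' * g * X1 ^ k, u2' * g * X1 ^ k) v
          = g * (a * \<alpha>) * (u1' * z2 - u2' * z1) + g * (b * \<beta>) * (u1' * z2 - u2' * z1)"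
      by (simp add: A_op_def dec(8) z1_def z2_def algebra_simps)
    then show ?thesis
      using Ladd[OF h\<phi>[OF hprod[OF dec(3,5)] hz] h\<phi>[OF hprod[OF dec(4,6)] hz]]
        qnull[OF hprod[OF dec(3,5)] q1 hz] qnull[OF hprod[OF dec(4,6)] q2 hz]
      by simp
  qed

  have cone: "homogeneous N (sum_list (map2 rscale cs ss)) \<and> L (sum_list (map2 rscale cs ss)) \<ge> 0"
    if "length cs = length ss" "\<forall>c\<in>set cs. c \<ge> 0" "\<forall>s\<in>set ss. homogeneous N s \<and> L s \<ge> 0" for cs ss
    using that
  proof (induction cs ss rule: list_induct2)
    case Nil
    then show ?case using L0 by simp
  next
    case (Cons c cs s ss)
    then have hs: "homogeneous N s" "L s \<ge> 0" "c \<ge> 0" by auto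
    have IH: "homogeneous N (sum_list (map2 rscale cs ss))" "L (sum_list (map2 rscale cs ss)) \<ge> 0"
      using Cons by auto
    have "L (rscale c s + sum_list (map2 rscale cs ss)) = c * L s + L (sum_list (map2 rscale cs ss))"
      using Ladd[OF homogeneous_rscale[OF hs(1)] IH(1)] Lsc[OF hs(1)] by simp
    moreover have "c * L s \<ge> 0" using hs by simp
    ultimately show ?case using IH hs homogeneous_add homogeneous_rscale by simp
  qed
  obtain a0 b0 where ab0: "p = a0 + b0" "a0 \<in> A_image d (u1' * g * X1 ^ k, u2' * g * X1 ^ k)"
      "b0 \<in> cone_of (sigma ` A_kernel d (u1, u2))"
    using mem by (auto simp: set_plus_b_def)
  obtain v where v: "homogeneous d (fst v)" "homogeneous d (snd v)"
      "a0 = A_op (u1' * g * X1 ^ k, u2' * g * X1 ^ k) v"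
    using ab0(2) by (auto simp: A_image_def forms_def)
  have La0: "L a0 = 0" using key[OF v(1,2)] v(3) by simp
  obtain cs ss where css: "length cs = length ss" "\<forall>c\<in>set cs. c \<ge> 0"
      "set ss \<subseteq> sigma ` A_kernel d (u1, u2)" "b0 = sum_list (map2 rscale cs ss)"
    using ab0(3) unfolding cone_of_def by blast
  have "\<forall>s\<in>set ss. homogeneous N s \<and> L s \<ge> 0"
  proof
    fix s assume "s \<in> set ss"
    then obtain w where w: "w \<in> A_kernel d (u1, u2)" "s = sigma w" using css(3) by blast
    have hw: "homogeneous d (fst w)" "homogeneous d (snd w)" "A_op (u1, u2) w = 0"
      using w(1) by (auto simp: A_kernel_def forms_def)
    have "homogeneous N s" using hsig[OF hw(1,2)] w(2) by simp
    moreover have "L s \<ge> 0" using Hess[OF hw(1,2)] hw(3) ip0[of 0] w(2) by simp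
    ultimately show "homogeneous N s \<and> L s \<ge> 0" by blast
  qed
  then have hb0: "homogeneous N b0" "L b0 \<ge> 0" using cone[OF css(1,2)] css(4) by auto
  have ha0: "homogeneous N a0" using homogeneous_diff[OF hp hb0(1)] ab0(1) by simp
  have Lp: "L p \<ge> 0" using Ladd[OF ha0 hb0(1)] ab0(1) La0 hb0(2) by simp
  have Ls: "L (sigma (u1, u2)) = 0"
  proof -
    have "A_op (u1, u2) (u1, u2) = sigma (u1, u2)" by (simp add: A_op_def sigma_def power2_eq_square)
    then show ?thesis using Grad[of "(u1, u2)"] hu1 hu2 by simp
  qed
  have "L (sigma (u1, u2)) = L r + L p"
    using Ladd[OF hr hp] by (simp add: r_def)
  then have Lr: "L r \<le> 0" using Ls Lp by simp
  have "ip r r \<ge> 0"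
  proof (cases "r = 0")
    case True then show ?thesis using ip0[OF hr] by simp
  next
    case False then show ?thesis using ippos[OF hr] by simp
  qed
  then have "ip r r = 0" using Lr by (simp add: L_def)
  then show ?thesis by (simp add: f_obj_def r_def)
qed

end
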